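(* Let $f,g$ be holomorphic functions on a neighbourhood of $0$ in $\mathbb{C}^n$ vanishing at $0$, and let $\varepsilon>0$ be sufficiently small. The critical points of the map $$\phi=\frac{f/g}{|f/g|}:\mathbb{S}^{2n-1}_\varepsilon\setminus(L_f\cup L_g)\to\mathbb{S}^1$$ are exactly the points $z=(z_1,\dots,z_n)$ at which the vector $i\,\mathrm{grad}\,\log(f/g)(z)$ is a real multiple of $z$.
   Context: $\mathbb{S}^{2n-1}_\varepsilon$ is the sphere of radius $\varepsilon$ about $0$ in $\mathbb{C}^n$, $L_f=f^{-1}(0)\cap\mathbb{S}^{2n-1}_\varepsilon$ and $L_g=g^{-1}(0)\cap\mathbb{S}^{2n-1}_\varepsilon$. For a (meromorphic) function $h$, $\mathrm{grad}\,h=\big(\overline{\partial h/\partial z_1},\dots,\overline{\partial h/\partial z_n}\big)$; thus $\mathrm{grad}\,\log(f/g)$ has $j$-th component $\overline{(\partial f/\partial z_j)/f-(\partial g/\partial z_j)/g}$, defined off $(fg)^{-1}(0)$. *)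

theory Defs
  imports "HOL-Analysis.Analysis"
begin

definition cn_holomorphic_on :: "(complex^'n \<Rightarrow> complex) \<Rightarrow> (complex^'n) set \<Rightarrow> bool" where
  "cn_holomorphic_on f U \<longleftrightarrow>
     (\<forall>z\<in>U. \<exists>D. (f has_derivative D) (at z) \<and> (\<forall>c v. D (c *s v) = c * D v))"

definition cpartial :: "'n \<Rightarrow> (complex^'n \<Rightarrow> complex) \<Rightarrow> complex^'n \<Rightarrow> complex" where
  "cpartial j f z = deriv (\<lambda>t. f (\<chi> k. if k = j then t else z $ k)) (z $ j)"

definition grad_log_quot :: "(complex^'n \<Rightarrow> complex) \<Rightarrow> (complex^'n \<Rightarrow> complex) \<Rightarrow> complex^'n \<Rightarrow> complex^'n" where
  "grad_log_quot f g z = (\<chi> j. cnj (cpartial j f z / f z - cpartial j g z / g z))"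

text \<open>z (on the sphere |z| = eps) is a critical point of the restriction to the sphere of a
  map phi into the unit circle: the differential of phi restricted to the tangent space
  {v. z \<bullet> v = 0} of the sphere at z does not surject onto the tangent line of S^1 at phi z.\<close>
definition sphere_critical_point :: "(complex^'n \<Rightarrow> complex) \<Rightarrow> complex^'n \<Rightarrow> bool" where
  "sphere_critical_point \<phi> z \<longleftrightarrow>
     (\<exists>D. (\<phi> has_derivative D) (at z) \<and>
          \<not> ({\<i> * complex_of_real t * \<phi> z | t. True} \<subseteq> D ` {v. inner z v = 0}))"

end

theory Submission
  imports Defs
begin

lemma lin_expand:
  fixes D :: "complex^'n \<Rightarrow> complex"
  assumes "linear D" and "\<forall>c v. D (c *s v) = c * D v"
  shows "D v = (\<Sum>j\<in>UNIV. v$j * D (axis j 1))"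
proof -
  have "D v = D (\<Sum>j\<in>UNIV. (v$j) *s axis j 1)" by (simp add: basis_expansion)
  also have "\<dots> = (\<Sum>j\<in>UNIV. D ((v$j) *s axis j 1))"
    using assms(1) by (simp add: linear_sum)
  also have "\<dots> = (\<Sum>j\<in>UNIV. v$j * D (axis j 1))" using assms(2) by simp
  finally show ?thesis .
qed

lemma bl_axis: "bounded_linear (\<lambda>s::complex. axis j s :: complex^'n)"
proof (rule bounded_linear_intro[where K=1])
  fix x y :: complex show "axis j (x + y) = (axis j x + axis j y :: complex^'n)"
    by (simp add: vec_eq_iff axis_def)
next
  fix r :: real and x :: complex show "axis j (r *\<^sub>R x) = r *\<^sub>R (axis j x :: complex^'n)"
    by (simp add: vec_eq_iff axis_def)
next
  fix x :: complex show "norm (axis j x :: complex^'n) \<le> norm x * 1"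
  proof -
    have "norm (axis j x :: complex^'n) \<le> (\<Sum>i\<in>UNIV. norm ((axis j x :: complex^'n) $ i))"
      unfolding norm_vec_def by (rule L2_set_le_sum) simp
    also have "\<dots> = norm x" by (simp add: axis_def if_distrib sum.If_cases cong del: if_weak_cong)
    finally show ?thesis by simp
  qed
qed

lemma cpartial_eq:
  fixes f :: "complex^'n \<Rightarrow> complex"
  assumes d: "(f has_derivative D) (at z)" and hom: "\<forall>c v. D (c *s v) = c * D v"
  shows "cpartial j f z = D (axis j 1)"
proof -
  define p where "p = (\<lambda>t. z + axis j (t - z$j) :: complex^'n)"
  have p_eq: "(\<chi> k. if k = j then t else z $ k) = p t" for t
    by (auto simp: p_def vec_eq_iff axis_def)
  have pz: "p (z$j) = z" by (simp add: p_def axis_def vec_eq_iff)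
  have "(p has_derivative (\<lambda>s. axis j s)) (at (z$j))"
  proof -
    have "((\<lambda>t. t - z$j) has_derivative (\<lambda>s. s - 0)) (at (z$j))"
      by (rule has_derivative_diff[OF has_derivative_ident has_derivative_const])
    then have "((\<lambda>t. axis j (t - z$j) :: complex^'n) has_derivative (\<lambda>s. axis j (s - 0))) (at (z$j))"
      by (rule bounded_linear.has_derivative[OF bl_axis])
    then have "((\<lambda>t. z + axis j (t - z$j) :: complex^'n) has_derivative (\<lambda>s. 0 + axis j (s - 0))) (at (z$j))"
      by (rule has_derivative_add[OF has_derivative_const])
    then show ?thesis unfolding p_def by simp
  qed
  then have "((\<lambda>t. f (p t)) has_derivative (\<lambda>s. D (axis j s))) (at (z$j))"
    using has_derivative_compose[of p _ "z$j" UNIV f D] d pz by simp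
  moreover have "(\<lambda>s. D (axis j s)) = (\<lambda>s. D (axis j 1) * s)"
  proof
    fix s :: complex
    have "axis j s = (s *s axis j 1 :: complex^'n)" by (simp add: vec_eq_iff axis_def)
    then show "D (axis j s) = D (axis j 1) * s" using hom by simp
  qed
  ultimately have "((\<lambda>t. f (p t)) has_field_derivative D (axis j 1)) (at (z$j))"
    by (simp add: has_field_derivative_def)
  then show ?thesis unfolding cpartial_def p_eq by (rule DERIV_imp_deriv)
qed

lemma inner_mult_sgn:
  fixes h q :: complex
  assumes "h \<noteq> 0"
  shows "inner (h * q) (sgn h) = cmod h * Re q"
proof -
  have "sgn h = (1 / cmod h) *\<^sub>R h" by (simp add: sgn_div_norm divide_inverse_commute)
  then have "inner (h * q) (sgn h) = inner (h * q) h / cmod h" by (simp add: inner_scaleR_right)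
  also have "inner (h * q) h = Re q * (cmod h)^2"
    unfolding cmod_power2 by (simp add: inner_complex_def algebra_simps power2_eq_square)
  finally show ?thesis using assms by (simp add: power2_eq_square)
qed

lemma sgn_deriv:
  fixes h :: "'a::real_normed_vector \<Rightarrow> complex"
  assumes d: "(h has_derivative Dh) (at z)" and nz: "h z \<noteq> 0"
  shows "((\<lambda>w. h w / complex_of_real (cmod (h w))) has_derivative
           (\<lambda>v. (h z / complex_of_real (cmod (h z))) * (\<i> * complex_of_real (Im (Dh v / h z))))) (at z)"
proof -
  have n: "((\<lambda>w. cmod (h w)) has_derivative (\<lambda>v. inner (Dh v) (sgn (h z)))) (at z)"
    using has_derivative_compose[OF d has_derivative_norm[OF nz]] .
  have n2: "((\<lambda>w. complex_of_real (cmod (h w))) has_derivative (\<lambda>v. complex_of_real (inner (Dh v) (sgn (h z))))) (at z)"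
    using has_derivative_of_real[OF n] .
  have nz2: "complex_of_real (cmod (h z)) \<noteq> 0" using nz by simp
  have *: "(Dh v * complex_of_real (cmod (h z)) - h z * complex_of_real (inner (Dh v) (sgn (h z))))
            / (complex_of_real (cmod (h z)) * complex_of_real (cmod (h z)))
        = (h z / complex_of_real (cmod (h z))) * (\<i> * complex_of_real (Im (Dh v / h z)))" for v
  proof -
    define q where "q = Dh v / h z"
    have H: "Dh v = h z * q" using nz by (simp add: q_def)
    have iq: "q - complex_of_real (Re q) = \<i> * complex_of_real (Im q)" by (simp add: complex_eq_iff)
    have "(Dh v * complex_of_real (cmod (h z)) - h z * complex_of_real (inner (Dh v) (sgn (h z))))
            / (complex_of_real (cmod (h z)) * complex_of_real (cmod (h z)))
          = (h z * q * complex_of_real (cmod (h z)) - h z * complex_of_real (cmod (h z) * Re q))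
            / (complex_of_real (cmod (h z)) * complex_of_real (cmod (h z)))"
      unfolding H inner_mult_sgn[OF nz] ..
    also have "\<dots> = (h z / complex_of_real (cmod (h z))) * (q - complex_of_real (Re q))"
      using nz2 by (simp add: field_simps)
    also have "\<dots> = (h z / complex_of_real (cmod (h z))) * (\<i> * complex_of_real (Im q))" by (simp only: iq)
    finally show ?thesis unfolding q_def .
  qed
  show ?thesis using has_derivative_divide'[OF d n2 nz2] by (simp only: *)
qed

lemma scaleR_vs:
  fixes z :: "complex^'n"
  shows "r *\<^sub>R z = complex_of_real r *s z"
proof -
  have "(r *\<^sub>R z)$i = (complex_of_real r *s z)$i" for i
  proof -
    have "(r *\<^sub>R z)$i = r *\<^sub>R (z$i)" by simp
    also have "\<dots> = complex_of_real r * z$i" by (rule scaleR_conv_of_real)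
    finally show ?thesis by simp
  qed
  then show ?thesis by (simp add: vec_eq_iff)
qed

lemma perp_iff:
  fixes z w :: "complex^'n"
  assumes "z \<noteq> 0"
  shows "(\<forall>v. inner z v = 0 \<longrightarrow> inner w v = 0) \<longleftrightarrow> (\<exists>r::real. w = complex_of_real r *s z)"
proof
  assume H: "\<forall>v. inner z v = 0 \<longrightarrow> inner w v = 0"
  define r where "r = inner w z / inner z z"
  define v where "v = w - r *\<^sub>R z"
  have zz: "inner z z \<noteq> 0" using assms by simp
  have "inner z v = 0" using zz by (simp add: v_def r_def inner_diff_right inner_commute)
  then have "inner w v = 0" using H by simp
  then have "inner v v = 0" using \<open>inner z v = 0\<close> by (simp add: v_def inner_diff_left)
  then have "w = r *\<^sub>R z" by (simp add: v_def)
  moreover have "r *\<^sub>R z = complex_of_real r *s z" by (rule scaleR_vs)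
  ultimately show "\<exists>r::real. w = complex_of_real r *s z" by auto
next
  assume "\<exists>r::real. w = complex_of_real r *s z"
  then obtain r where r: "w = complex_of_real r *s z" by auto
  have "w = r *\<^sub>R z" using r by (simp add: scaleR_vs)
  then show "\<forall>v. inner z v = 0 \<longrightarrow> inner w v = 0" by simp
qed

lemma crit_iff:
  fixes Dp :: "'a::real_inner \<Rightarrow> complex"
  assumes Dp: "\<And>v. Dp v = c * (\<i> * complex_of_real (L v))" and c: "c \<noteq> 0"
    and L: "\<And>r v. L (r *\<^sub>R v) = r * L v"
    and T: "\<And>r v. v \<in> T \<Longrightarrow> r *\<^sub>R v \<in> T"
  shows "(\<not> ({\<i> * complex_of_real t * c | t. True} \<subseteq> Dp ` T)) \<longleftrightarrow> (\<forall>v\<in>T. L v = 0)"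
proof
  assume "\<not> ({\<i> * complex_of_real t * c | t. True} \<subseteq> Dp ` T)"
  then obtain t where t: "\<i> * complex_of_real t * c \<notin> Dp ` T" by auto
  show "\<forall>v\<in>T. L v = 0"
  proof (rule ccontr)
    assume "\<not> (\<forall>v\<in>T. L v = 0)"
    then obtain v where v: "v \<in> T" "L v \<noteq> 0" by auto
    have "(t / L v) *\<^sub>R v \<in> T" using T v by simp
    moreover have "Dp ((t / L v) *\<^sub>R v) = \<i> * complex_of_real t * c"
      using v(2) by (simp add: Dp L)
    ultimately show False using t by (metis image_eqI)
  qed
next
  assume H: "\<forall>v\<in>T. L v = 0"
  have "\<i> * complex_of_real 1 * c \<notin> Dp ` T" using H c by (auto simp: Dp)
  then show "\<not> ({\<i> * complex_of_real t * c | t. True} \<subseteq> Dp ` T)" by blast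
qed

lemma inner_grad:
  fixes a :: "'n::finite \<Rightarrow> complex" and v :: "complex^'n"
  shows "Im (\<Sum>j\<in>UNIV. v$j * a j) = inner (\<i> *s (\<chi> j. cnj (a j))) v"
  by (simp add: inner_vec_def Im_sum inner_complex_def algebra_simps)

theorem lemma2p2:
  fixes f g :: "complex^'n \<Rightarrow> complex" and U :: "(complex^'n) set"
  assumes "open U" and "0 \<in> U"
    and "cn_holomorphic_on f U" and "cn_holomorphic_on g U"
    and "f 0 = 0" and "g 0 = 0"
  shows "\<exists>\<epsilon>0>0. \<forall>\<epsilon>. 0 < \<epsilon> \<and> \<epsilon> < \<epsilon>0 \<longrightarrow>
           (\<forall>z \<in> sphere 0 \<epsilon>. f z \<noteq> 0 \<and> g z \<noteq> 0 \<longrightarrow>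
              (sphere_critical_point (\<lambda>w. (f w / g w) / complex_of_real (cmod (f w / g w))) z
               \<longleftrightarrow> (\<exists>r::real. \<i> *s grad_log_quot f g z = complex_of_real r *s z)))"
proof -
  obtain e where e: "e > 0" "ball 0 e \<subseteq> U" using assms(1,2) open_contains_ball by blast
  have main: "(sphere_critical_point (\<lambda>w. (f w / g w) / complex_of_real (cmod (f w / g w))) z
               \<longleftrightarrow> (\<exists>r::real. \<i> *s grad_log_quot f g z = complex_of_real r *s z))"
    if z: "z \<in> U" "z \<noteq> 0" and fz: "f z \<noteq> 0" and gz: "g z \<noteq> 0" for z
  proof -
    obtain Df where Df: "(f has_derivative Df) (at z)" "\<forall>c v. Df (c *s v) = c * Df v"
      using assms(3) z(1) unfolding cn_holomorphic_on_def by blast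
    obtain Dg where Dg: "(g has_derivative Dg) (at z)" "\<forall>c v. Dg (c *s v) = c * Dg v"
      using assms(4) z(1) unfolding cn_holomorphic_on_def by blast
    have linf: "linear Df" using Df(1) has_derivative_bounded_linear bounded_linear.linear by blast
    have ling: "linear Dg" using Dg(1) has_derivative_bounded_linear bounded_linear.linear by blast
    define h where "h = (\<lambda>w. f w / g w)"
    define Dh where "Dh = (\<lambda>v. (Df v * g z - f z * Dg v) / (g z * g z))"
    have hd: "(h has_derivative Dh) (at z)"
      unfolding h_def Dh_def by (rule has_derivative_divide'[OF Df(1) Dg(1) gz])
    have hz: "h z \<noteq> 0" using fz gz by (simp add: h_def)
    define a where "a = (\<lambda>j. cpartial j f z / f z - cpartial j g z / g z)"
    define w where "w = \<i> *s grad_log_quot f g z"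
    have w_eq: "w = \<i> *s (\<chi> j. cnj (a j))" by (simp add: w_def a_def grad_log_quot_def)
    define L where "L = (\<lambda>v. Im (Dh v / h z))"
    have L_eq: "L v = inner w v" for v
    proof -
      have "Dh v / h z = Df v / f z - Dg v / g z"
        using fz gz by (simp add: Dh_def h_def field_simps)
      also have "\<dots> = (\<Sum>j\<in>UNIV. v$j * a j)"
        unfolding lin_expand[OF linf Df(2), of v] lin_expand[OF ling Dg(2), of v]
          a_def cpartial_eq[OF Df] cpartial_eq[OF Dg]
        by (simp add: sum_divide_distrib sum_subtractf[symmetric] algebra_simps)
      finally show ?thesis unfolding L_def w_eq inner_grad[symmetric] by (rule arg_cong[where f=Im])
    qed
    define Dp where "Dp = (\<lambda>v. (h z / complex_of_real (cmod (h z))) * (\<i> * complex_of_real (L v)))"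
    have pd: "((\<lambda>w. h w / complex_of_real (cmod (h w))) has_derivative Dp) (at z)"
      unfolding Dp_def L_def by (rule sgn_deriv[OF hd hz])
    have c: "h z / complex_of_real (cmod (h z)) \<noteq> 0" using hz by simp
    have "sphere_critical_point (\<lambda>w. h w / complex_of_real (cmod (h w))) z \<longleftrightarrow>
          \<not> ({\<i> * complex_of_real t * (h z / complex_of_real (cmod (h z))) | t. True} \<subseteq> Dp ` {v. inner z v = 0})"
      unfolding sphere_critical_point_def using pd has_derivative_unique by blast
    also have "\<dots> \<longleftrightarrow> (\<forall>v\<in>{v. inner z v = 0}. L v = 0)"
      by (rule crit_iff[OF _ c]) (auto simp: Dp_def L_eq)
    also have "\<dots> \<longleftrightarrow> (\<forall>v. inner z v = 0 \<longrightarrow> inner w v = 0)" by (simp add: L_eq)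
    also have "\<dots> \<longleftrightarrow> (\<exists>r::real. w = complex_of_real r *s z)" by (rule perp_iff[OF z(2)])
    finally show ?thesis unfolding h_def w_def .
  qed
  show ?thesis
  proof (intro exI[of _ e] conjI allI impI ballI e(1))
    fix \<epsilon> z assume eps: "0 < \<epsilon> \<and> \<epsilon> < e" and zs: "z \<in> sphere 0 \<epsilon>"
      and nz: "f z \<noteq> 0 \<and> g z \<noteq> 0"
    have "z \<in> U" using zs eps e(2) by (auto simp: subset_iff)
    moreover have "z \<noteq> 0" using zs eps by auto
    ultimately show "sphere_critical_point (\<lambda>w. f w / g w / complex_of_real (cmod (f w / g w))) z =
         (\<exists>r. \<i> *s grad_log_quot f g z = complex_of_real r *s z)"
      using main nz by blast
  qed
qed

end
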